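(* Let $C_{n,1}$ be the number of comparisons made by Quickselect to find the smallest element of a list of $n$ distinct numbers, and let $W_{n,1}=\frac{1}{n}C_{n,1}-1$. Let $D$ have the standard Dickman distribution. Then for all $n\ge 1$, $$d_1(W_{n,1},D)\le \frac{8\log(n/2)+10}{n}.$$
   Context: Quickselect (to find the $m$-th smallest element of a list of $n\ge m$ distinct numbers): a pivot is chosen uniformly at random from the list and compared with each of the other $n-1$ elements; the elements smaller than the pivot form the left sublist and those larger form the right sublist. If the left sublist has size $m-1$, the pivot is the answer and the procedure stops; if it has size $\ge m$, the procedure recurses on the left sublist to find its $m$-th smallest element; otherwise (left size $L<m-1$) it recurses on the right sublist to find its $(m-L-1)$-th smallest element. All pivot choices are independent. $C_{n,m}$ denotes the total number of comparisons made (a random variable whose law depends only on $n,m$). The standard Dickman distribution is the unique law of a non-negative random variable $D$ satisfying $D=_d U(D+1)$, where $U\sim\mathcal U[0,1]$ is independent of $D$. The Wasserstein distance is $d_1(X,Y)=\sup_{h\in \mathrm{Lip}_1}|Eh(X)-Eh(Y)|$, where $\mathrm{Lip}_1=\{h:|h(y)-h(x)|\le|y-x|\}$. *)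

theory Defs
  imports "HOL-Probability.Probability"
begin

text \<open>Law of the number of comparisons C(n,m) made by Quickselect on n distinct numbers
  when searching for the m-th smallest. The pivot's left-sublist size L is uniform on
  {0..<n}; the pivot is compared with the n-1 other elements.\<close>

function quickselect_cmp :: "nat \<Rightarrow> nat \<Rightarrow> nat pmf" where
  "quickselect_cmp n m =
     (if n = 0 then return_pmf 0
      else pmf_of_set {0..<n} \<bind> (\<lambda>L.
        if L = m - 1 then return_pmf (n - 1)
        else if L \<ge> m then map_pmf (\<lambda>c. (n - 1) + c) (quickselect_cmp L m)
        else map_pmf (\<lambda>c. (n - 1) + c) (quickselect_cmp (n - L - 1) (m - L - 1))))"
  by pat_completeness auto
termination
  by (relation "Wellfounded.measure fst") (auto simp: set_pmf_of_set)

definition W_law :: "nat \<Rightarrow> real measure" where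
  "W_law n = distr (measure_pmf (quickselect_cmp n 1)) borel (\<lambda>c. real c / real n - 1)"

definition dickman_law :: "real measure \<Rightarrow> bool" where
  "dickman_law M \<longleftrightarrow> prob_space M \<and> sets M = sets borel \<and> (AE x in M. x \<ge> 0) \<and>
     distr (M \<Otimes>\<^sub>M uniform_measure lborel {0..1}) borel (\<lambda>(d, u). u * (d + 1)) = M"

definition wasserstein1 :: "real measure \<Rightarrow> real measure \<Rightarrow> ereal" where
  "wasserstein1 M N =
     (SUP h \<in> {h :: real \<Rightarrow> real. \<forall>x y. \<bar>h y - h x\<bar> \<le> \<bar>y - x\<bar>}.
        ereal \<bar>(\<integral>x. h x \<partial>M) - (\<integral>x. h x \<partial>N)\<bar>)"

end

theory Submission
  imports Defs "HOL-Analysis.Harmonic_Numbers"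
begin


declare quickselect_cmp.simps[simp del]

lemma qs1_eq: "n \<ge> 1 \<Longrightarrow> quickselect_cmp n 1 = pmf_of_set {0..<n} \<bind> (\<lambda>L.
        if L = 0 then return_pmf (n - 1)
        else map_pmf (\<lambda>c. (n - 1) + c) (quickselect_cmp L 1))"
  by (subst quickselect_cmp.simps[of n 1]) (auto intro!: bind_pmf_cong simp: set_pmf_of_set)

lemma qs_support: "set_pmf (quickselect_cmp n 1) \<subseteq> {..n*n}"
proof (induction n rule: less_induct)
  case (less n)
  show ?case
  proof (cases "n = 0")
    case True then show ?thesis by (subst quickselect_cmp.simps) simp
  next
    case False
    have "c \<le> n*n" if c: "c \<in> set_pmf (quickselect_cmp n 1)" for c
    proof -
      have "c \<in> set_pmf (pmf_of_set {0..<n} \<bind> (\<lambda>L.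
        if L = 0 then return_pmf (n - 1)
        else map_pmf (\<lambda>c. (n - 1) + c) (quickselect_cmp L 1)))"
        using c qs1_eq[of n] False by simp
      then obtain L where L: "L < n" and
        cL: "c \<in> set_pmf (if L = 0 then return_pmf (n - 1)
             else map_pmf (\<lambda>c. (n - 1) + c) (quickselect_cmp L 1))"
        using False by (auto simp: set_pmf_of_set)
      show ?thesis
      proof (cases "L = 0")
        case True then show ?thesis using cL by (auto intro: order_trans[OF diff_le_self le_square])
      next
        case False
        then obtain c' where c': "c = n - 1 + c'" "c' \<in> set_pmf (quickselect_cmp L 1)" using cL by auto
        have "c' \<le> L*L" using less.IH[OF L] c'(2) by auto
        also have "L*L \<le> (n-1)*(n-1)" using L by (intro mult_le_mono) auto
        finally have "c \<le> n - 1 + (n-1)*(n-1)" using c' by linarith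
        also have "\<dots> \<le> n*n" using \<open>n \<noteq> 0\<close> by (cases n) auto
        finally show ?thesis .
      qed
    qed
    then show ?thesis by auto
  qed
qed

lemma qs_finite: "finite (set_pmf (quickselect_cmp n 1))"
  using qs_support finite_subset by blast

lemma int_bind_pmf:
  fixes f :: "nat \<Rightarrow> real"
  assumes "\<And>x. x \<in> set_pmf M \<Longrightarrow> set_pmf (N x) \<subseteq> {..B}"
  shows "(\<integral>c. f c \<partial>bind_pmf M N) = (\<integral>x. (\<integral>c. f c \<partial>N x) \<partial>M)"
proof -
  define g where "g c = (if c \<le> B then f c else 0)" for c
  have gb: "\<bar>g c\<bar> \<le> (\<Sum>i\<le>B. \<bar>f i\<bar>)" for c
    unfolding g_def by (auto intro: member_le_sum[where f="\<lambda>i. \<bar>f i\<bar>"])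
  have "(\<integral>c. f c \<partial>bind_pmf M N) = (\<integral>c. g c \<partial>bind_pmf M N)"
    using assms by (intro integral_cong_AE) (auto simp: AE_measure_pmf_iff g_def)
  also have "\<dots> = (\<integral>x. (\<integral>c. g c \<partial>N x) \<partial>M)"
    unfolding measure_pmf_bind
    by (rule integral_bind[where K="count_space UNIV" and B="\<Sum>i\<le>B. \<bar>f i\<bar>" and B'=1])
       (auto simp: gb measure_pmf_in_subprob_algebra measure_pmf.finite_measure_axioms)
  also have "\<dots> = (\<integral>x. (\<integral>c. f c \<partial>N x) \<partial>M)"
  proof (intro integral_cong_AE)
    show "AE x in measure_pmf M. (\<integral>c. g c \<partial>N x) = (\<integral>c. f c \<partial>N x)"
      unfolding AE_measure_pmf_iff
    proof
      fix x assume x: "x \<in> set_pmf M"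
      show "(\<integral>c. g c \<partial>N x) = (\<integral>c. f c \<partial>N x)"
        using assms[OF x] by (intro integral_cong_AE) (auto simp: AE_measure_pmf_iff g_def)
    qed
  qed auto
  finally show ?thesis .
qed

lemma qs_expand:
  fixes g :: "nat \<Rightarrow> real"
  assumes "n \<ge> 1"
  shows "(\<integral>c. g c \<partial>quickselect_cmp n 1) =
    (\<Sum>L<n. if L = 0 then g (n-1) else (\<integral>c. g (n-1+c) \<partial>quickselect_cmp L 1)) / n"
proof -
  have e: "quickselect_cmp n 1 = pmf_of_set {0..<n} \<bind> (\<lambda>L.
        if L = 0 then return_pmf (n - 1)
        else map_pmf (\<lambda>c. (n - 1) + c) (quickselect_cmp L 1))"
    using assms by (rule qs1_eq)
  have "(\<integral>c. g c \<partial>quickselect_cmp n 1) = (\<integral>L. (\<integral>c. g c \<partial>(if L = 0 then return_pmf (n - 1)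
        else map_pmf (\<lambda>c. (n - 1) + c) (quickselect_cmp L 1))) \<partial>pmf_of_set {0..<n})"
    unfolding e
  proof (rule int_bind_pmf[where B="n*n"])
    fix L assume "L \<in> set_pmf (pmf_of_set {0..<n})"
    then have L: "L < n" using assms by (auto simp: set_pmf_of_set)
    show "set_pmf (if L = 0 then return_pmf (n - 1)
        else map_pmf (\<lambda>c. (n - 1) + c) (quickselect_cmp L 1)) \<subseteq> {..n*n}"
    proof (cases "L = 0")
      case True then show ?thesis using assms by (auto intro: order_trans[OF diff_le_self le_square])
    next
      case False
      have "n - 1 + c \<le> n*n" if "c \<le> L*L" for c
      proof -
        have "L*L \<le> (n-1)*(n-1)" using L by (intro mult_le_mono) auto
        then have "n - 1 + c \<le> (n-1) + (n-1)*(n-1)" using that by linarith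
        also have "\<dots> \<le> n*n" using assms by (cases n) auto
        finally show ?thesis .
      qed
      then show ?thesis using False qs_support[of L] by auto
    qed
  qed
  also have "\<dots> = (\<Sum>L<n. if L = 0 then g (n-1) else (\<integral>c. g (n-1+c) \<partial>quickselect_cmp L 1)) / n"
    using assms by (subst integral_pmf_of_set) (auto simp: lessThan_atLeast0 intro!: sum.cong)
  finally show ?thesis .
qed



abbreviation U :: "real measure" where "U \<equiv> uniform_measure lborel {0..1::real}"

lemma U_prob: "prob_space U"
  by (rule prob_space_uniform_measure) auto

lemma U_eq: "U = density lborel (\<lambda>x. ennreal (indicator {0..1} x))"
  unfolding uniform_measure_def by (intro density_cong) (auto split: split_indicator)

lemma U_int:
  fixes f :: "real \<Rightarrow> real"
  assumes "continuous_on UNIV f"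
  shows "(\<integral>u. f u \<partial>U) = integral {0..1} f"
proof -
  have m: "f \<in> borel_measurable lborel" using assms
    by (simp add: borel_measurable_continuous_onI)
  have "(\<integral>u. f u \<partial>U) = (\<integral>u. indicator {0..1} u *\<^sub>R f u \<partial>lborel)"
    unfolding U_eq by (rule integral_density) (use m in auto)
  also have "\<dots> = (LINT x : {0..1} | lborel. f x)" by (simp add: set_lebesgue_integral_def)
  also have "\<dots> = integral {0..1} f"
    apply (rule set_borel_integral_eq_integral)
    unfolding set_integrable_def
    by (rule borel_integrable_compact) (auto intro: continuous_on_subset[OF assms])
  finally show ?thesis .
qed

lemma U_AE: "AE u in U. 0 \<le> u \<and> u \<le> 1"
  by (rule AE_uniform_measureI) auto

lemma dick:
  assumes "dickman_law D"
  shows "prob_space D" "sets D = sets borel" "AE x in D. 0 \<le> x"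
    "distr (D \<Otimes>\<^sub>M U) borel (\<lambda>(d, u). u * (d + 1)) = D"
  using assms unfolding dickman_law_def by auto

lemma dick_pair:
  assumes "dickman_law D"
  shows "pair_sigma_finite D U"
  using dick[OF assms] U_prob
  by (intro pair_sigma_finite.intro prob_space_imp_sigma_finite) auto

lemma dick_meas_pair:
  assumes "dickman_law D"
  shows "measurable (D \<Otimes>\<^sub>M U) N = measurable (borel \<Otimes>\<^sub>M borel) N"
  using dick(2)[OF assms] by (intro measurable_cong_sets sets_pair_measure_cong) auto

lemma dick_meas:
  assumes "dickman_law D"
  shows "measurable D N = measurable borel N"
  using dick(2)[OF assms] by (intro measurable_cong_sets) auto

lemma dick_int_eq:
  fixes f :: "real \<Rightarrow> real"
  assumes D: "dickman_law D" and f[measurable]: "f \<in> borel_measurable borel"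
    and int: "integrable (D \<Otimes>\<^sub>M U) (\<lambda>p. f (snd p * (fst p + 1)))"
  shows "(\<integral>x. f x \<partial>D) = (\<integral>d. (\<integral>u. f (u * (d + 1)) \<partial>U) \<partial>D)"
proof -
  interpret pair_sigma_finite D U by (rule dick_pair[OF D])
  have T: "(\<lambda>(d, u). u * (d + 1)) \<in> measurable (D \<Otimes>\<^sub>M U) borel"
    unfolding dick_meas_pair[OF D] by measurable
  have "(\<integral>x. f x \<partial>D) = (\<integral>x. f x \<partial>distr (D \<Otimes>\<^sub>M U) borel (\<lambda>(d, u). u * (d + 1)))"
    using dick(4)[OF D] by simp
  also have "\<dots> = (\<integral>p. f ((\<lambda>(d, u). u * (d + 1)) p) \<partial>(D \<Otimes>\<^sub>M U))"
    by (rule integral_distr[OF T f])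
  also have "\<dots> = (\<integral>p. f (snd p * (fst p + 1)) \<partial>(D \<Otimes>\<^sub>M U))"
    by (simp add: case_prod_beta)
  also have "\<dots> = (\<integral>d. (\<integral>u. f (u * (d + 1)) \<partial>U) \<partial>D)"
    using integral_fst'[OF int] by simp
  finally show ?thesis .
qed

lemma dick_prod_int_bounded:
  fixes f :: "real \<Rightarrow> real"
  assumes D: "dickman_law D" and f[measurable]: "f \<in> borel_measurable borel"
    and b: "\<And>x. \<bar>f x\<bar> \<le> B"
  shows "integrable (D \<Otimes>\<^sub>M U) (\<lambda>p. f (snd p * (fst p + 1)))"
proof -
  interpret P: prob_space "D \<Otimes>\<^sub>M U"
    using dick(1)[OF D] U_prob by (intro prob_space_pair)
  show ?thesis
    by (rule P.integrable_const_bound[where B=B]) (auto simp: b dick_meas_pair[OF D])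
qed

lemma dick_prod_int_lin:
  fixes f :: "real \<Rightarrow> real"
  assumes D: "dickman_law D" and f[measurable]: "f \<in> borel_measurable borel"
    and b: "\<And>x. \<bar>f x\<bar> \<le> A + \<bar>x\<bar>" and iD: "integrable D (\<lambda>x. x)"
  shows "integrable (D \<Otimes>\<^sub>M U) (\<lambda>p. f (snd p * (fst p + 1)))"
proof -
  interpret pair_sigma_finite D U by (rule dick_pair[OF D])
  interpret UP: prob_space U by (rule U_prob)
  interpret DP: prob_space D by (rule dick(1)[OF D])
  have g: "integrable D (\<lambda>d. A + \<bar>d\<bar> + 1)"
    using iD by (intro Bochner_Integration.integrable_add integrable_abs DP.integrable_const) auto
  have "integrable (distr (D \<Otimes>\<^sub>M U) D fst) (\<lambda>d. A + \<bar>d\<bar> + 1)"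
    unfolding UP.distr_pair_fst[of D] by (rule g)
  then have g2: "integrable (D \<Otimes>\<^sub>M U) (\<lambda>p. A + \<bar>fst p\<bar> + 1)"
    by (subst (asm) integrable_distr_eq) (auto simp: dick_meas[OF D])
  have ae: "AE p in D \<Otimes>\<^sub>M U. 0 \<le> snd p \<and> snd p \<le> 1"
  proof (rule AE_pair_measure)
    have "Measurable.pred (D \<Otimes>\<^sub>M U) (\<lambda>p. 0 \<le> snd p \<and> snd p \<le> 1)"
      unfolding pred_def dick_meas_pair[OF D] by measurable
    then show "{p \<in> space (D \<Otimes>\<^sub>M U). 0 \<le> snd p \<and> snd p \<le> 1} \<in> sets (D \<Otimes>\<^sub>M U)"
      by (simp add: pred_def)
    show "AE d in D. AE u in U. 0 \<le> snd (d, u) \<and> snd (d, u) \<le> 1"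
      using U_AE by simp
  qed
  show ?thesis
  proof (rule Bochner_Integration.integrable_bound[OF g2])
    show "(\<lambda>p. f (snd p * (fst p + 1))) \<in> borel_measurable (D \<Otimes>\<^sub>M U)"
      by (simp add: dick_meas_pair[OF D])
    show "AE p in D \<Otimes>\<^sub>M U. norm (f (snd p * (fst p + 1))) \<le> norm (A + \<bar>fst p\<bar> + 1)"
      using ae
    proof eventually_elim
      case (elim p)
      have "\<bar>snd p * (fst p + 1)\<bar> \<le> 1 * \<bar>fst p + 1\<bar>"
        unfolding abs_mult using elim by (intro mult_right_mono) auto
      then have "\<bar>f (snd p * (fst p + 1))\<bar> \<le> A + \<bar>fst p\<bar> + 1"
        using b[of "snd p * (fst p + 1)"] abs_triangle_ineq[of "fst p" 1] by (simp only: mult_1 abs_one)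
      then show ?case by simp
    qed
  qed
qed




lemma U_int_id: "(\<integral>u. u \<partial>U) = 1/2"
  using U_int[of "\<lambda>u. u"] by (simp add: continuous_on_id power2_eq_square)

lemma dick_trunc:
  assumes D: "dickman_law D"
  shows "(\<integral>d. (if d \<le> real k then d else 0) \<partial>D) \<le> 2"
proof -
  interpret DP: prob_space D by (rule dick(1)[OF D])
  interpret UP: prob_space U by (rule U_prob)
  interpret PS: pair_sigma_finite D U by (rule dick_pair[OF D])
  define K where "K = real k + 1"
  have K0: "0 \<le> K" unfolding K_def by simp
  define f where "f x = max 0 (min x K)" for x :: real
  have fm[measurable]: "f \<in> borel_measurable borel" unfolding f_def by measurable
  have fb: "\<bar>f x\<bar> \<le> K" for x unfolding f_def using K0 by auto
  define G where "G d = (if d \<le> real k then (d+1)/2 else K)" for d :: real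
  define H where "H d = (if d \<le> real k then d else real k)" for d :: real
  have Dmeas: "measurable D borel = measurable borel borel" by (rule dick_meas[OF D])
  have AEd: "AE d in D. 0 \<le> d" by (rule dick(3)[OF D])
  have pint: "integrable (D \<Otimes>\<^sub>M U) (\<lambda>p. f (snd p * (fst p + 1)))"
    by (rule dick_prod_int_bounded[OF D fm fb])
  have eq: "(\<integral>x. f x \<partial>D) = (\<integral>d. (\<integral>u. f (u * (d + 1)) \<partial>U) \<partial>D)"
    by (rule dick_int_eq[OF D fm pint])
  have Gint: "integrable D G"
  proof (rule DP.integrable_const_bound[where B=K])
    show "AE x in D. norm (G x) \<le> K" using AEd
      by eventually_elim (auto simp: G_def K_def)
    show "G \<in> borel_measurable D" unfolding Dmeas G_def by measurable
  qed
  have Hint: "integrable D H"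
  proof (rule DP.integrable_const_bound[where B=K])
    show "AE x in D. norm (H x) \<le> K" using AEd
      by eventually_elim (auto simp: H_def K_def)
    show "H \<in> borel_measurable D" unfolding Dmeas H_def by measurable
  qed
  have fint: "integrable D f"
    by (rule DP.integrable_const_bound[where B=K]) (auto simp: fb Dmeas)
  have iint: "integrable D (\<lambda>d. \<integral>u. f (u * (d + 1)) \<partial>U)"
    using PS.integrable_fst'[OF pint] by simp
  have up: "(\<integral>d. (\<integral>u. f (u * (d + 1)) \<partial>U) \<partial>D) \<le> (\<integral>d. G d \<partial>D)"
  proof (rule integral_mono_AE[OF iint Gint])
    show "AE d in D. (\<integral>u. f (u * (d + 1)) \<partial>U) \<le> G d" using AEd
    proof eventually_elim
      case (elim d)
      have fU: "integrable U (\<lambda>u. f (u * (d + 1)))"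
        by (rule UP.integrable_const_bound[where B=K]) (auto simp: fb)
      show ?case
      proof (cases "d \<le> real k")
        case True
        have lU: "integrable U (\<lambda>u. u * (d + 1))"
        proof (rule UP.integrable_const_bound[where B="d+1"])
          show "AE x in U. norm (x * (d + 1)) \<le> d + 1" using U_AE
            by eventually_elim (use elim in \<open>auto simp: abs_mult intro!: mult_left_le_one_le\<close>)
        qed simp
        have "(\<integral>u. f (u * (d + 1)) \<partial>U) \<le> (\<integral>u. u * (d + 1) \<partial>U)"
        proof (rule integral_mono_AE[OF fU lU])
          show "AE u in U. f (u * (d + 1)) \<le> u * (d + 1)" using U_AE
            by eventually_elim (use elim in \<open>auto simp: f_def\<close>)
        qed
        also have "\<dots> = (d+1)/2" using U_int_id by simp
        finally show ?thesis using True by (simp add: G_def)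
      next
        case False
        have "(\<integral>u. f (u * (d + 1)) \<partial>U) \<le> (\<integral>u. K \<partial>U)"
          by (rule integral_mono[OF fU]) (auto simp: fb abs_le_D1)
        then show ?thesis using False by (simp add: G_def)
      qed
    qed
  qed
  have low: "(\<integral>d. H d \<partial>D) \<le> (\<integral>x. f x \<partial>D)"
    by (rule integral_mono[OF Hint fint]) (auto simp: H_def f_def K_def)
  have Eint: "integrable D (\<lambda>d. if d \<le> real k then 1 else 2::real)"
    by (rule DP.integrable_const_bound[where B=2]) (auto simp: Dmeas)
  have E2: "(\<integral>d. (if d \<le> real k then 1 else 2::real) \<partial>D) \<le> 2"
  proof -
    have "(\<integral>d. (if d \<le> real k then 1 else 2::real) \<partial>D) \<le> (\<integral>d. 2 \<partial>D)"
      by (rule integral_mono[OF Eint]) auto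
    then show ?thesis by (simp add: DP.prob_space)
  qed
  have pw: "(\<lambda>d. if d \<le> real k then d else 0) = (\<lambda>d. 2 * (H d - G d) + (if d \<le> real k then 1 else 2::real))"
    by (auto simp: H_def G_def K_def fun_eq_iff field_simps)
  have "(\<integral>d. (if d \<le> real k then d else 0) \<partial>D) = 2 * ((\<integral>d. H d \<partial>D) - (\<integral>d. G d \<partial>D)) + (\<integral>d. (if d \<le> real k then 1 else 2::real) \<partial>D)"
    unfolding pw using Hint Gint Eint by simp
  also have "\<dots> \<le> 0 + 2"
  proof (rule add_mono)
    have "(\<integral>d. H d \<partial>D) - (\<integral>d. G d \<partial>D) \<le> 0" using up low eq by linarith
    then show "2 * ((\<integral>d. H d \<partial>D) - (\<integral>d. G d \<partial>D)) \<le> 0" by simp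
  qed (rule E2)
  finally show ?thesis by simp
qed

lemma dick_mean:
  assumes D: "dickman_law D"
  shows "integrable D (\<lambda>x. x)" "(\<integral>x. x \<partial>D) \<le> 2"
proof -
  interpret DP: prob_space D by (rule dick(1)[OF D])
  have Dmeas: "measurable D borel = measurable borel borel" by (rule dick_meas[OF D])
  have AEd: "AE d in D. 0 \<le> d" by (rule dick(3)[OF D])
  define p where "p k d = ennreal (if d \<le> real k then d else 0)" for k :: nat and d :: real
  have inc: "incseq p"
    unfolding incseq_def le_fun_def p_def by (auto intro!: ennreal_leI)
  have sup: "(SUP k. p k d) = ennreal d" for d
  proof (rule antisym)
    show "(SUP k. p k d) \<le> ennreal d"
      by (rule SUP_least) (auto simp: p_def)
    show "ennreal d \<le> (SUP k. p k d)"
      by (rule SUP_upper2[where i="nat \<lceil>d\<rceil>"]) (auto simp: p_def real_nat_ceiling_ge)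
  qed
  have pint: "integrable D (\<lambda>d. if d \<le> real k then d else 0)" for k
  proof (rule DP.integrable_const_bound[where B="real k"])
    show "AE x in D. norm (if x \<le> real k then x else 0) \<le> real k" using AEd
      by eventually_elim auto
  qed (simp add: Dmeas)
  have "(\<integral>\<^sup>+d. ennreal d \<partial>D) = (\<integral>\<^sup>+d. (SUP k. p k d) \<partial>D)" by (simp add: sup)
  also have "\<dots> = (SUP k. integral\<^sup>N D (p k))"
    by (rule nn_integral_monotone_convergence_SUP[OF inc]) (unfold p_def Dmeas, measurable)
  also have "\<dots> \<le> 2"
  proof (rule SUP_least)
    fix k
    have "integral\<^sup>N D (p k) = ennreal (\<integral>d. (if d \<le> real k then d else 0) \<partial>D)"
      unfolding p_def by (rule nn_integral_eq_integral[OF pint]) (use AEd in auto)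
    also have "\<dots> \<le> 2" using dick_trunc[OF D, of k] by (metis ennreal_leI ennreal_numeral)
    finally show "integral\<^sup>N D (p k) \<le> 2" .
  qed
  finally have nn: "(\<integral>\<^sup>+d. ennreal d \<partial>D) \<le> 2" .
  then have fin: "(\<integral>\<^sup>+d. ennreal d \<partial>D) < \<infinity>"
    using order.strict_trans1 by fastforce
  show "integrable D (\<lambda>x. x)"
    by (rule integrableI_nonneg[OF _ AEd fin]) (simp add: Dmeas)
  have "(\<integral>x. x \<partial>D) = enn2real (\<integral>\<^sup>+d. ennreal d \<partial>D)"
    by (rule integral_eq_nn_integral[OF _ AEd]) (simp add: Dmeas)
  also have "\<dots> \<le> enn2real 2"
    by (rule enn2real_mono[OF nn]) simp
  also have "\<dots> = 2" by simp
  finally show "(\<integral>x. x \<partial>D) \<le> 2" .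
qed




lemma riemann_split:
  fixes f :: "real \<Rightarrow> real"
  assumes cont: "continuous_on UNIV f" and n: "n \<ge> 1" and k: "k \<le> n"
  shows "integral {0..real k / n} f = (\<Sum>L<k. integral {real L / n..real (Suc L) / n} f)"
  using k
proof (induction k)
  case 0 then show ?case by simp
next
  case (Suc k)
  have "integral {0..real k / n} f + integral {real k / n..real (Suc k) / n} f = integral {0..real (Suc k) / n} f"
    by (rule Henstock_Kurzweil_Integration.integral_combine) (auto intro!: integrable_continuous_interval continuous_on_subset[OF cont] divide_right_mono)
  then show ?case using Suc by simp
qed

lemma riemann:
  fixes f :: "real \<Rightarrow> real" and c :: "nat \<Rightarrow> real"
  assumes cont: "continuous_on UNIV f" and n: "n \<ge> 1" and B: "B \<ge> 0"
    and bnd: "\<And>L u. L < n \<Longrightarrow> real L / n \<le> u \<Longrightarrow> u \<le> real (Suc L) / n \<Longrightarrow> \<bar>f u - c L\<bar> \<le> B"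
  shows "\<bar>integral {0..1} f - (\<Sum>L<n. c L) / n\<bar> \<le> B"
proof -
  have npos: "real n > 0" using n by simp
  have each: "\<bar>integral {real L / n..real (Suc L) / n} f - c L / n\<bar> \<le> B / n" if L: "L < n" for L
  proof -
    let ?a = "real L / n" and ?b = "real (Suc L) / n"
    have ab: "?a \<le> ?b" using npos by (simp add: divide_right_mono)
    have fi: "f integrable_on {?a..?b}"
      by (rule integrable_continuous_interval) (rule continuous_on_subset[OF cont], simp)
    have "((\<lambda>u. f u - c L) has_integral (integral {?a..?b} f - c L * (?b - ?a))) {?a..?b}"
      by (intro has_integral_diff integrable_integral fi)
         (use has_integral_const_real[of "c L" ?a ?b] ab in \<open>simp add: mult.commute\<close>)
    then have "norm (integral {?a..?b} f - c L * (?b - ?a)) \<le> B * Henstock_Kurzweil_Integration.content (cbox ?a ?b)"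
      by (intro has_integral_bound[OF B]) (use bnd[OF L] in auto)
    moreover have "?b - ?a = 1 / n" using npos by (simp add: field_simps)
    moreover have "Henstock_Kurzweil_Integration.content (cbox ?a ?b) = 1 / n" using ab npos by (simp add: field_simps)
    ultimately show ?thesis by simp
  qed
  have "integral {0..1} f = (\<Sum>L<n. integral {real L / n..real (Suc L) / n} f)"
    using riemann_split[OF cont n order.refl] npos by simp
  then have "integral {0..1} f - (\<Sum>L<n. c L) / n = (\<Sum>L<n. integral {real L / n..real (Suc L) / n} f - c L / n)"
    by (simp add: sum_subtractf sum_divide_distrib)
  also have "\<bar>\<dots>\<bar> \<le> (\<Sum>L<n. \<bar>integral {real L / n..real (Suc L) / n} f - c L / n\<bar>)"
    by (rule sum_abs)
  also have "\<dots> \<le> (\<Sum>L<n. B / n)" by (intro sum_mono each) simp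
  also have "\<dots> = B" using npos by simp
  finally show ?thesis .
qed




lemma sum_bound:
  assumes "n \<ge> (1::nat)"
  shows "(\<Sum>L\<in>{1..<n}. 8 * ln (real L / 2) + 10) \<le> real n * (8 * ln (real n / 2) + 6)"
  using assms
proof (induction n rule: nat_induct_at_least)
  case base
  have "ln (1/2::real) = - ln 2" by (simp add: ln_div)
  then show ?case using ln2_le_25_over_36 by simp
next
  case (Suc n)
  have np: "real n > 0" using Suc by simp
  have d: "ln (real n) - ln (real n + 1) \<le> (real n - (real n + 1)) / (real n + 1)"
    by (rule ln_diff_le) (use np in auto)
  have "(real n + 1) * ((real n - (real n + 1)) / (real n + 1)) = -1" using np by simp
  then have key: "(real n + 1) * (ln (real n + 1) - ln (real n)) \<ge> 1"
    using d mult_left_mono[OF d, of "real n + 1"] np by (simp add: algebra_simps)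
  have l1: "ln (real n / 2) = ln (real n) - ln 2" using np by (simp add: ln_div)
  have l2: "ln ((1 + real n) / 2) = ln (1 + real n) - ln 2" by (simp add: ln_div)
  have "(\<Sum>L\<in>{1..<Suc n}. 8 * ln (real L / 2) + 10) = (\<Sum>L\<in>{1..<n}. 8 * ln (real L / 2) + 10) + (8 * ln (real n / 2) + 10)"
    using Suc by simp
  also have "\<dots> \<le> real n * (8 * ln (real n / 2) + 6) + (8 * ln (real n / 2) + 10)"
    using Suc by simp
  also have "\<dots> \<le> real (Suc n) * (8 * ln (real (Suc n) / 2) + 6)"
    using key unfolding of_nat_Suc by (simp add: algebra_simps l1 l2)
  finally show ?case .
qed

definition lip1 :: "(real \<Rightarrow> real) \<Rightarrow> bool" where
  "lip1 h \<longleftrightarrow> (\<forall>x y. \<bar>h y - h x\<bar> \<le> \<bar>y - x\<bar>)"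

lemma lip_cont:
  assumes "lip1 h" shows "continuous_on UNIV h"
  unfolding continuous_on_iff dist_real_def
proof (intro ballI allI impI)
  fix x e :: real assume "0 < e"
  show "\<exists>d>0. \<forall>x'\<in>UNIV. \<bar>x' - x\<bar> < d \<longrightarrow> \<bar>h x' - h x\<bar> < e"
  proof (intro exI conjI ballI impI)
    fix x' assume "\<bar>x' - x\<bar> < e"
    moreover have "\<bar>h x' - h x\<bar> \<le> \<bar>x' - x\<bar>" using assms unfolding lip1_def by blast
    ultimately show "\<bar>h x' - h x\<bar> < e" by linarith
  qed (rule \<open>0 < e\<close>)
qed

lemma lip_meas: "lip1 h \<Longrightarrow> h \<in> borel_measurable borel"
  using lip_cont by (simp add: borel_measurable_continuous_onI)

lemma lip_growth:
  assumes "lip1 h" shows "\<bar>h x\<bar> \<le> \<bar>h 0\<bar> + \<bar>x\<bar>"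
proof -
  have "\<bar>h x - h 0\<bar> \<le> \<bar>x - 0\<bar>" using assms unfolding lip1_def by blast
  then show ?thesis using abs_triangle_ineq[of "h x - h 0" "h 0"] by simp
qed

lemma lip_intD:
  assumes D: "dickman_law D" and h: "lip1 h"
  shows "integrable D h"
proof -
  interpret DP: prob_space D by (rule dick(1)[OF D])
  have g: "integrable D (\<lambda>x. \<bar>h 0\<bar> + \<bar>x\<bar>)"
    using dick_mean(1)[OF D] by (intro Bochner_Integration.integrable_add integrable_abs DP.integrable_const)
  show ?thesis
    by (rule Bochner_Integration.integrable_bound[OF g])
       (auto simp: dick_meas[OF D] lip_meas[OF h] lip_growth[OF h])
qed




lemma W_int:
  fixes h :: "real \<Rightarrow> real"
  assumes "h \<in> borel_measurable borel"
  shows "(\<integral>x. h x \<partial>W_law n) = (\<integral>c. h (real c / n - 1) \<partial>quickselect_cmp n 1)"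
  unfolding W_law_def by (rule Bochner_Integration.integral_distr) (use assms in auto)

lemma main:
  assumes D: "dickman_law D"
  shows "n \<ge> 1 \<Longrightarrow> lip1 h \<Longrightarrow>
    \<bar>(\<integral>x. h x \<partial>W_law n) - (\<integral>x. h x \<partial>D)\<bar> \<le> (8 * ln (real n / 2) + 10) / real n"
proof (induction n arbitrary: h rule: less_induct)
  case (less n)
  note n = less.prems(1) and h = less.prems(2)
  interpret DP: prob_space D by (rule dick(1)[OF D])
  interpret UP: prob_space U by (rule U_prob)
  interpret PS: pair_sigma_finite D U by (rule dick_pair[OF D])
  have npos: "real n > 0" using n by simp
  define hL where "hL L d = h (real L / real n * (d + 1) - 1 / real n)" for L d
  define aL where "aL L = (if L = 0 then h (real (n-1) / n - 1)
      else (\<integral>c. h (real (n - 1 + c) / n - 1) \<partial>quickselect_cmp L 1))" for L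
  have hm: "h \<in> borel_measurable borel" by (rule lip_meas[OF h])
  have hL_lip: "lip1 (hL L)" if "L \<le> n" for L
    unfolding lip1_def
  proof (intro allI)
    fix x y
    have q: "real L / real n \<le> 1" "0 \<le> real L / real n" using that npos by auto
    have "\<bar>hL L y - hL L x\<bar> \<le> \<bar>(real L / real n * (y + 1) - 1 / real n) - (real L / real n * (x + 1) - 1 / real n)\<bar>"
      using h unfolding lip1_def hL_def by blast
    also have "\<dots> = \<bar>(real L / real n) * (y - x)\<bar>" by (simp add: right_diff_distrib distrib_left)
    also have "\<dots> = (real L / real n) * \<bar>y - x\<bar>" using q by (simp add: abs_mult)
    also have "\<dots> \<le> 1 * \<bar>y - x\<bar>" using q by (intro mult_right_mono) auto
    finally show "\<bar>hL L y - hL L x\<bar> \<le> \<bar>y - x\<bar>" by simp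
  qed
  have hLint: "integrable D (hL L)" if "L \<le> n" for L by (rule lip_intD[OF D hL_lip[OF that]])
  have A: "(\<integral>x. h x \<partial>W_law n) = (\<Sum>L<n. aL L) / n"
    unfolding W_int[OF hm] qs_expand[OF n] aL_def by simp
  define F where "F d = (\<integral>u. h (u * (d + 1)) \<partial>U)" for d
  have pint: "integrable (D \<Otimes>\<^sub>M U) (\<lambda>p. h (snd p * (fst p + 1)))"
    by (rule dick_prod_int_lin[OF D hm lip_growth[OF h] dick_mean(1)[OF D]])
  have B: "(\<integral>x. h x \<partial>D) = (\<integral>d. F d \<partial>D)"
    unfolding F_def by (rule dick_int_eq[OF D hm pint])
  have Fint: "integrable D F"
    using PS.integrable_fst'[OF pint] unfolding F_def by simp
  define S where "S d = (\<Sum>L<n. hL L d) / n" for d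
  have Sint: "integrable D S"
    unfolding S_def by (intro integrable_divide integrable_sum) (auto intro!: hLint)
  have C: "\<bar>F d - S d\<bar> \<le> (d + 2) / n" if d: "d \<ge> 0" for d
  proof -
    have hc: "continuous_on UNIV (\<lambda>u. h (u * (d + 1)))"
      by (rule continuous_on_compose2[OF lip_cont[OF h]]) (auto intro!: continuous_intros)
    have "F d = integral {0..1} (\<lambda>u. h (u * (d + 1)))"
      unfolding F_def by (rule U_int[OF hc])
    moreover have "\<bar>integral {0..1} (\<lambda>u. h (u * (d + 1))) - (\<Sum>L<n. hL L d) / n\<bar> \<le> (d + 2) / n"
    proof (rule riemann[OF hc n])
      show "0 \<le> (d + 2) / real n" using d npos by simp
      fix L u assume L: "L < n" and u1: "real L / real n \<le> u" and u2: "u \<le> real (Suc L) / real n"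
      have "\<bar>h (u * (d + 1)) - hL L d\<bar> \<le> \<bar>u * (d + 1) - (real L / real n * (d + 1) - 1 / real n)\<bar>"
        using h unfolding lip1_def hL_def by blast
      also have "\<dots> = \<bar>(u - real L / real n) * (d + 1) + 1 / real n\<bar>" by (simp add: algebra_simps)
      also have "\<dots> \<le> (u - real L / real n) * (d + 1) + 1 / real n"
        using u1 d npos by simp
      also have "\<dots> \<le> (1 / real n) * (d + 1) + 1 / real n"
      proof -
        have "real (Suc L) / real n = real L / real n + 1 / real n" by (simp add: add_divide_distrib)
        then have "u - real L / real n \<le> 1 / real n" using u2 by linarith
        then show ?thesis using d by (intro add_right_mono mult_right_mono) auto
      qed
      also have "\<dots> = (d + 2) / real n" by (simp add: add_divide_distrib[symmetric])
      finally show "\<bar>h (u * (d + 1)) - hL L d\<bar> \<le> (d + 2) / real n" .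
    qed
    ultimately show ?thesis unfolding S_def by simp
  qed
  have E: "\<bar>(\<integral>d. F d \<partial>D) - (\<integral>d. S d \<partial>D)\<bar> \<le> 4 / n"
  proof -
    have i2: "integrable D (\<lambda>d. (d + 2) / n)"
      using dick_mean(1)[OF D] by (intro integrable_divide Bochner_Integration.integrable_add DP.integrable_const)
    have "\<bar>(\<integral>d. F d \<partial>D) - (\<integral>d. S d \<partial>D)\<bar> = \<bar>\<integral>d. F d - S d \<partial>D\<bar>"
      using Fint Sint by simp
    also have "\<dots> \<le> (\<integral>d. \<bar>F d - S d\<bar> \<partial>D)" by (rule integral_abs_bound)
    also have "\<dots> \<le> (\<integral>d. (d + 2) / n \<partial>D)"
      by (rule integral_mono_AE[OF _ i2]) (use Fint Sint C dick(3)[OF D] in \<open>auto elim!: eventually_mono\<close>)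
    also have "\<dots> = ((\<integral>d. d \<partial>D) + 2) / n"
      using dick_mean(1)[OF D] by (simp add: DP.prob_space)
    also have "\<dots> \<le> 4 / n" using dick_mean(2)[OF D] npos by (simp add: divide_right_mono)
    finally show ?thesis .
  qed
  have Dsum: "(\<integral>d. S d \<partial>D) = (\<Sum>L<n. (\<integral>d. hL L d \<partial>D)) / n"
  proof -
    have "(\<integral>d. (\<Sum>L<n. hL L d) \<partial>D) = (\<Sum>L<n. (\<integral>d. hL L d \<partial>D))"
      by (rule Bochner_Integration.integral_sum) (auto intro!: hLint)
    then show ?thesis unfolding S_def by simp
  qed
  have Fb: "\<bar>aL L - (\<integral>d. hL L d \<partial>D)\<bar> \<le> (if L = 0 then 0 else (8 * ln (real L / 2) + 10) / n)"
    if L: "L < n" for L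
  proof (cases "L = 0")
    case True
    have "real (n - 1) / real n - 1 = - 1 / real n" using n npos by (simp add: field_simps of_nat_diff)
    then show ?thesis using True by (simp add: aL_def hL_def DP.prob_space)
  next
    case False
    then have L1: "L \<ge> 1" by simp
    have Lpos: "real L > 0" using L1 by simp
    define g where "g x = (real n / real L) * hL L x" for x
    have glip: "lip1 g" unfolding lip1_def
    proof (intro allI)
      fix x y
      have "\<bar>h (real L / real n * (y + 1) - 1 / real n) - h (real L / real n * (x + 1) - 1 / real n)\<bar>
          \<le> \<bar>(real L / real n * (y + 1) - 1 / real n) - (real L / real n * (x + 1) - 1 / real n)\<bar>"
        using h unfolding lip1_def by blast
      also have "\<dots> = \<bar>(real L / real n) * (y - x)\<bar>" by (simp add: right_diff_distrib distrib_left)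
      also have "\<dots> = (real L / real n) * \<bar>y - x\<bar>" using Lpos npos by (simp add: abs_mult)
      finally have "(real n / real L) * \<bar>hL L y - hL L x\<bar> \<le> (real n / real L) * ((real L / real n) * \<bar>y - x\<bar>)"
        unfolding hL_def using Lpos npos by (intro mult_left_mono) auto
      also have "\<dots> = \<bar>y - x\<bar>" using Lpos npos by simp
      finally have le: "(real n / real L) * \<bar>hL L y - hL L x\<bar> \<le> \<bar>y - x\<bar>" .
      have "g y - g x = (real n / real L) * (hL L y - hL L x)"
        unfolding g_def by (simp add: right_diff_distrib)
      then have "\<bar>g y - g x\<bar> = (real n / real L) * \<bar>hL L y - hL L x\<bar>"
        using Lpos npos by (simp add: abs_mult)
      then show "\<bar>g y - g x\<bar> \<le> \<bar>y - x\<bar>" using le by simp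
    qed
    have IH: "\<bar>(\<integral>x. g x \<partial>W_law L) - (\<integral>x. g x \<partial>D)\<bar> \<le> (8 * ln (real L / 2) + 10) / real L"
      by (rule less.IH[OF L L1 glip])
    have gW: "(\<integral>x. g x \<partial>W_law L) = (real n / real L) * aL L"
    proof -
      have "(\<integral>x. g x \<partial>W_law L) = (\<integral>c. g (real c / L - 1) \<partial>quickselect_cmp L 1)"
        by (rule W_int) (rule lip_meas[OF glip])
      also have "\<dots> = (\<integral>c. (real n / real L) * h (real (n - 1 + c) / n - 1) \<partial>quickselect_cmp L 1)"
      proof (rule Bochner_Integration.integral_cong[OF refl])
        fix c
        have "real L / real n * (real c / real L - 1 + 1) - 1 / real n = real (n - 1 + c) / real n - 1"
          using Lpos npos n by (simp add: field_simps of_nat_diff)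
        then show "g (real c / real L - 1) = (real n / real L) * h (real (n - 1 + c) / real n - 1)"
          unfolding g_def hL_def by simp
      qed
      also have "\<dots> = (real n / real L) * aL L" using False by (simp add: aL_def)
      finally show ?thesis .
    qed
    have gD: "(\<integral>x. g x \<partial>D) = (real n / real L) * (\<integral>d. hL L d \<partial>D)"
      unfolding g_def by simp
    have "\<bar>aL L - (\<integral>d. hL L d \<partial>D)\<bar> = (real L / real n) * \<bar>(\<integral>x. g x \<partial>W_law L) - (\<integral>x. g x \<partial>D)\<bar>"
    proof -
      have "(real n / real L) * aL L - (real n / real L) * (\<integral>d. hL L d \<partial>D) = (real n / real L) * (aL L - (\<integral>d. hL L d \<partial>D))"
        by (simp add: right_diff_distrib)
      then have "\<bar>(real n / real L) * aL L - (real n / real L) * (\<integral>d. hL L d \<partial>D)\<bar> = (real n / real L) * \<bar>aL L - (\<integral>d. hL L d \<partial>D)\<bar>"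
        using Lpos npos by (simp add: abs_mult)
      then show ?thesis unfolding gW gD using Lpos npos by simp
    qed
    also have "\<dots> \<le> (real L / real n) * ((8 * ln (real L / 2) + 10) / real L)"
      using IH Lpos npos by (intro mult_left_mono) auto
    also have "\<dots> = (8 * ln (real L / 2) + 10) / n" using Lpos npos by simp
    finally show ?thesis using False by simp
  qed
  have G: "\<bar>(\<Sum>L<n. aL L) / n - (\<Sum>L<n. (\<integral>d. hL L d \<partial>D)) / n\<bar> \<le> (8 * ln (real n / 2) + 6) / n"
  proof -
    have "\<bar>(\<Sum>L<n. aL L) / n - (\<Sum>L<n. (\<integral>d. hL L d \<partial>D)) / n\<bar> = \<bar>\<Sum>L<n. aL L - (\<integral>d. hL L d \<partial>D)\<bar> / n"
      using npos by (simp add: sum_subtractf flip: diff_divide_distrib)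
    also have "\<dots> \<le> (\<Sum>L<n. \<bar>aL L - (\<integral>d. hL L d \<partial>D)\<bar>) / n"
      using npos by (intro divide_right_mono sum_abs) auto
    also have "\<dots> \<le> (\<Sum>L<n. (if L = 0 then 0 else (8 * ln (real L / 2) + 10) / n)) / n"
      using npos by (intro divide_right_mono sum_mono Fb) auto
    also have "(\<Sum>L<n. (if L = 0 then 0 else (8 * ln (real L / 2) + 10) / n)) = (\<Sum>L\<in>{1..<n}. 8 * ln (real L / 2) + 10) / n"
    proof -
      have "(\<Sum>L<n. (if L = 0 then 0 else (8 * ln (real L / 2) + 10) / n)) =
          (\<Sum>L\<in>{0..<n}. (if L = 0 then 0 else (8 * ln (real L / 2) + 10) / n))"
        by (simp add: lessThan_atLeast0)
      also have "\<dots> = (\<Sum>L\<in>{1..<n}. (8 * ln (real L / 2) + 10) / n)"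
        using n by (subst sum.atLeast_Suc_lessThan) (auto intro!: sum.cong)
      finally show ?thesis by (simp add: sum_divide_distrib)
    qed
    also have "(\<Sum>L\<in>{1..<n}. 8 * ln (real L / 2) + 10) / n / n \<le> (real n * (8 * ln (real n / 2) + 6)) / n / n"
      using sum_bound[OF n] npos by (intro divide_right_mono) auto
    also have "\<dots> = (8 * ln (real n / 2) + 6) / n" using npos by simp
    finally show ?thesis .
  qed
  have "\<bar>(\<integral>x. h x \<partial>W_law n) - (\<integral>x. h x \<partial>D)\<bar> \<le>
      \<bar>(\<Sum>L<n. aL L) / n - (\<Sum>L<n. (\<integral>d. hL L d \<partial>D)) / n\<bar> + \<bar>(\<integral>d. F d \<partial>D) - (\<integral>d. S d \<partial>D)\<bar>"
    unfolding A B Dsum by linarith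
  also have "\<dots> \<le> (8 * ln (real n / 2) + 6) / n + 4 / n" using G E by linarith
  also have "\<dots> = (8 * ln (real n / 2) + 10) / n" by (simp add: add_divide_distrib[symmetric])
  finally show ?case .
qed


theorem theorem1p1:
  fixes n :: nat and D :: "real measure"
  assumes "n \<ge> 1" and "dickman_law D"
  shows "wasserstein1 (W_law n) D \<le> ereal ((8 * ln (real n / 2) + 10) / real n)"
  unfolding wasserstein1_def
proof (rule SUP_least)
  fix h :: "real \<Rightarrow> real"
  assume "h \<in> {h :: real \<Rightarrow> real. \<forall>x y. \<bar>h y - h x\<bar> \<le> \<bar>y - x\<bar>}"
  then have "lip1 h" by (simp add: lip1_def)
  then show "ereal \<bar>(\<integral>x. h x \<partial>W_law n) - (\<integral>x. h x \<partial>D)\<bar> \<le> ereal ((8 * ln (real n / 2) + 10) / real n)"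
    using main[OF assms(2) assms(1)] by simp
qed

end
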